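(* Let $2\le k\le mn$, fix $p_x\in\mathcal{P}_k$, let $\Omega$ be a convex subset of $M_{m\times n}(\mathbb{C})$, and let $\Omega_d$ be the set of matrices in $\Omega$ having distinct zeros with respect to $p_x$. Then $\Omega_d$ is dense in $\Omega$ if and only if $\Omega_d$ is nonempty.
   Context: $M_{m\times n}(\mathbb{C})$ is the set of $m\times n$ complex matrices with the topology induced by the Frobenius norm. Let $\mathbb{C}_k[x]$ be the set of complex polynomials of degree $k$ and $\mathbb{C}^k_{\mathrm{sym}}$ the set of unordered $k$-tuples of complex numbers; $r_k:\mathbb{C}_k[x]\to\mathbb{C}^k_{\mathrm{sym}}$ sends a polynomial to the unordered $k$-tuple of its roots (with multiplicity). $\mathcal{P}_k$ is the set of maps $p_x:M_{m\times n}(\mathbb{C})\to\mathbb{C}_k[x]$ of the form $p_x(A)=x^k+\sum_{i=1}^{k}q_i(A)x^{i-1}$, where each $q_i(A)$ is a polynomial function of the entries of $A$, such that $r_k(p_x(M_{m\times n}(\mathbb{C})))=\mathbb{C}^k_{\mathrm{sym}}$. $A$ has distinct zeros with respect to $p_x$ if the polynomial $p_x(A)$ (in $x$) has $k$ pairwise distinct roots. *)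

theory Defs
  imports "HOL-Analysis.Analysis" "HOL-Computational_Algebra.Polynomial"
begin

text \<open>Complex m x n matrices: complex^'n^'m. The norm on this type is the
  Euclidean (l2) norm of all entries, i.e. the Frobenius norm.\<close>

inductive_set matrix_poly_fun :: "(complex^'n^'m \<Rightarrow> complex) set" where
  const: "(\<lambda>A. c) \<in> matrix_poly_fun"
| entry: "(\<lambda>A. A $ i $ j) \<in> matrix_poly_fun"
| add: "f \<in> matrix_poly_fun \<Longrightarrow> g \<in> matrix_poly_fun \<Longrightarrow> (\<lambda>A. f A + g A) \<in> matrix_poly_fun"
| mult: "f \<in> matrix_poly_fun \<Longrightarrow> g \<in> matrix_poly_fun \<Longrightarrow> (\<lambda>A. f A * g A) \<in> matrix_poly_fun"

definition px :: "nat \<Rightarrow> (nat \<Rightarrow> complex^'n^'m \<Rightarrow> complex) \<Rightarrow> complex^'n^'m \<Rightarrow> complex poly" where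
  "px k q A = monom 1 k + (\<Sum>i=1..k. monom (q i A) (i - 1))"

definition in_P :: "nat \<Rightarrow> (nat \<Rightarrow> complex^'n^'m \<Rightarrow> complex) \<Rightarrow> bool" where
  "in_P k q \<longleftrightarrow> (\<forall>i\<in>{1..k}. q i \<in> matrix_poly_fun) \<and>
     (\<forall>R :: complex multiset. size R = k \<longrightarrow> (\<exists>A. proots (px k q A) = R))"

definition distinct_zeros :: "nat \<Rightarrow> (nat \<Rightarrow> complex^'n^'m \<Rightarrow> complex) \<Rightarrow> complex^'n^'m \<Rightarrow> bool" where
  "distinct_zeros k q A \<longleftrightarrow> card {x. poly (px k q A) x = 0} = k"

end

theory Submission imports Defs Subresultants.Subresultant_Gcd "HOL-Computational_Algebra.Fundamental_Theorem_Algebra" "HOL-Computational_Algebra.Field_as_Ring" begin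

lemma card_set_mset_eq_size:
  "card (set_mset M) = size M \<longleftrightarrow> (\<forall>x. count M x \<le> 1)"
proof -
  let ?M' = "mset_set (set_mset M)"
  have sub: "?M' \<subseteq># M"
    by (rule mset_set_set_mset_msubset)
  have sz: "size ?M' = card (set_mset M)" by simp
  show ?thesis
  proof
    assume "card (set_mset M) = size M"
    hence "?M' = M" using sub sz
      by (metis mset_subset_size subset_mset.not_eq_order_implies_strict nat_less_le)
    then show "\<forall>x. count M x \<le> 1"
      by (metis count_mset_set' le_numeral_extra(4) zero_le)
  next
    assume "\<forall>x. count M x \<le> 1"
    hence "?M' = M"
      by (intro multiset_eqI) (auto simp add: count_mset_set' le_antisym Suc_leI count_eq_zero_iff)
    then show "card (set_mset M) = size M" using sz by simp
  qed
qed

lemma card_roots_rsquarefree: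
  fixes p :: "complex poly"
  assumes "p \<noteq> 0"
  shows "card {x. poly p x = 0} = degree p \<longleftrightarrow> rsquarefree p"
proof -
  have "card {x. poly p x = 0} = degree p \<longleftrightarrow> card (set_mset (proots p)) = size (proots p)"
    using assms by (simp add: set_count_proots size_proots_complex)
  also have "\<dots> \<longleftrightarrow> (\<forall>x. order x p \<le> 1)"
    unfolding card_set_mset_eq_size count_proots[OF assms] by (rule refl)
  also have "\<dots> \<longleftrightarrow> rsquarefree p"
    using assms unfolding rsquarefree_def by (metis le_Suc_eq le_zero_eq One_nat_def)
  finally show ?thesis .
qed

lemma resultant_rsquarefree:
  fixes p :: "complex poly"
  assumes "p \<noteq> 0"
  shows "resultant p (pderiv p) \<noteq> 0 \<longleftrightarrow> rsquarefree p"
proof -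
  let ?g = "gcd p (pderiv p)"
  have g0: "?g \<noteq> 0" using assms by simp
  have root: "poly ?g z = 0 \<longleftrightarrow> poly p z = 0 \<and> poly (pderiv p) z = 0" for z
    by (simp only: poly_eq_0_iff_dvd gcd_greatest_iff)
  have "degree ?g = 0 \<longleftrightarrow> (\<forall>z. poly ?g z \<noteq> 0)"
  proof
    assume "degree ?g = 0"
    then obtain c where "?g = [:c:]" by (metis degree_eq_zeroE)
    with g0 show "\<forall>z. poly ?g z \<noteq> 0" by auto
  next
    assume nz: "\<forall>z. poly ?g z \<noteq> 0"
    have "set_mset (proots ?g) = {}"
      unfolding set_count_proots[OF g0] using nz by blast
    then have "proots ?g = {#}" by simp
    then show "degree ?g = 0" using size_proots_complex[of ?g] by simp
  qed
  moreover have "resultant p (pderiv p) \<noteq> 0 \<longleftrightarrow> degree ?g = 0"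
    using resultant_0_gcd[of p "pderiv p"] by blast
  ultimately show ?thesis
    unfolding rsquarefree_roots[of p] by (simp add: root)
qed

lemma px_degree:
  fixes c :: "nat \<Rightarrow> 'a::comm_ring_1"
  assumes "k \<ge> 1"
  shows "degree (monom 1 k + (\<Sum>i=1..k. monom (c i) (i-1))) = k"
proof -
  have "degree (\<Sum>i=1..k. monom (c i) (i-1)) \<le> k - 1"
    by (rule degree_sum_le) (auto intro: order.trans[OF degree_monom_le])
  also have "\<dots> < k" using assms by simp
  also have "k = degree (monom (1::'a) k)" by (simp add: degree_monom_eq)
  finally show ?thesis by (subst degree_add_eq_left) (auto simp: degree_monom_eq)
qed

lemma line_poly:
  fixes A B :: "complex^'n^'m"
  assumes "f \<in> matrix_poly_fun"
  shows "\<exists>r. \<forall>t. f (\<chi> i j. vec_nth (vec_nth B i) j + t * (vec_nth (vec_nth A i) j - vec_nth (vec_nth B i) j)) = poly r t"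
  using assms
proof (induction rule: matrix_poly_fun.induct)
  case (const c)
  then show ?case by (intro exI[of _ "[:c:]"]) simp
next
  case (entry i j)
  then show ?case by (intro exI[of _ "[:vec_nth (vec_nth B i) j, vec_nth (vec_nth A i) j - vec_nth (vec_nth B i) j:]"]) (simp add: algebra_simps)
next
  case (add f g)
  then obtain r1 r2 where "\<forall>t. f (\<chi> i j. vec_nth (vec_nth B i) j + t * (vec_nth (vec_nth A i) j - vec_nth (vec_nth B i) j)) = poly r1 t"
     "\<forall>t. g (\<chi> i j. vec_nth (vec_nth B i) j + t * (vec_nth (vec_nth A i) j - vec_nth (vec_nth B i) j)) = poly r2 t" by blast
  then show ?case by (intro exI[of _ "r1 + r2"]) simp
next
  case (mult f g)
  then obtain r1 r2 where "\<forall>t. f (\<chi> i j. vec_nth (vec_nth B i) j + t * (vec_nth (vec_nth A i) j - vec_nth (vec_nth B i) j)) = poly r1 t"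
     "\<forall>t. g (\<chi> i j. vec_nth (vec_nth B i) j + t * (vec_nth (vec_nth A i) j - vec_nth (vec_nth B i) j)) = poly r2 t" by blast
  then show ?case by (intro exI[of _ "r1 * r2"]) simp
qed



lemma map_poly_poly_sum:
  "map_poly (\<lambda>p. poly p t) (sum f A) = (\<Sum>i\<in>A. map_poly (\<lambda>p. poly p t) (f i))"
  by (induction A rule: infinite_finite_induct) (simp_all add: map_poly_add)

theorem theorem5p5:
  fixes k :: nat and q :: "nat \<Rightarrow> complex^'n^'m \<Rightarrow> complex"
    and \<Omega> :: "(complex^'n^'m) set"
  assumes "2 \<le> k" and "k \<le> CARD('m) * CARD('n)"
    and "in_P k q"
    and "convex \<Omega>" and "\<Omega> \<noteq> {}"
  shows "\<Omega> \<subseteq> closure {A \<in> \<Omega>. distinct_zeros k q A} \<longleftrightarrow>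
         {A \<in> \<Omega>. distinct_zeros k q A} \<noteq> {}"
proof
  assume "\<Omega> \<subseteq> closure {A \<in> \<Omega>. distinct_zeros k q A}"
  then show "{A \<in> \<Omega>. distinct_zeros k q A} \<noteq> {}" using assms(5) by (metis closure_empty subset_empty)
next
  assume "{A \<in> \<Omega>. distinct_zeros k q A} \<noteq> {}"
  then obtain A0 where A0: "A0 \<in> \<Omega>" "distinct_zeros k q A0" by auto
  have k1: "k \<ge> 1" using assms(1) by simp
  have qpoly: "\<And>i. i \<in> {1..k} \<Longrightarrow> q i \<in> matrix_poly_fun"
    using assms(3) unfolding in_P_def by blast
  have pxdeg: "degree (px k q A) = k" for A
    unfolding px_def by (rule px_degree[OF k1])
  have px0: "px k q A \<noteq> 0" for A using pxdeg[of A] k1 by auto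
  have dz_iff: "distinct_zeros k q A \<longleftrightarrow> resultant (px k q A) (pderiv (px k q A)) \<noteq> 0" for A
    unfolding distinct_zeros_def
    using card_roots_rsquarefree[OF px0[of A]] resultant_rsquarefree[OF px0[of A]] pxdeg[of A]
    by simp
  show "\<Omega> \<subseteq> closure {A \<in> \<Omega>. distinct_zeros k q A}"
  proof
    fix B assume B: "B \<in> \<Omega>"
    define L where "L = (\<lambda>t::complex. (\<chi> i j. vec_nth (vec_nth B i) j + t * (vec_nth (vec_nth A0 i) j - vec_nth (vec_nth B i) j)) :: complex^'n^'m)"
    have "\<forall>i\<in>{1..k}. \<exists>r. \<forall>t. q i (L t) = poly r t"
      using line_poly[OF qpoly, of _ B A0] unfolding L_def by blast
    then obtain R where R: "\<And>i t. i \<in> {1..k} \<Longrightarrow> q i (L t) = poly (R i) t"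
      by metis
    define Q :: "complex poly poly" where "Q = monom 1 k + (\<Sum>i=1..k. monom (R i) (i-1))"
    have mapQ: "map_poly (\<lambda>p. poly p t) Q = px k q (L t)" for t
      unfolding Q_def px_def by (simp add: hom_distribs R map_poly_poly_sum)
    have degQ: "degree Q = k" unfolding Q_def by (rule px_degree[OF k1])
    have res: "resultant (px k q (L t)) (pderiv (px k q (L t))) = poly (resultant Q (pderiv Q)) t" for t
    proof -
      have "resultant (map_poly (\<lambda>p. poly p t) Q) (map_poly (\<lambda>p. poly p t) (pderiv Q)) =
            poly (resultant Q (pderiv Q)) t"
      proof (rule poly_hom.resultant_map_poly)
        show "degree (map_poly (\<lambda>p. poly p t) Q) = degree Q" using mapQ pxdeg degQ by simp
        show "degree (map_poly (\<lambda>p. poly p t) (pderiv Q)) = degree (pderiv Q)"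
          unfolding poly_hom.map_poly_pderiv mapQ degree_pderiv using pxdeg degQ by simp
      qed
      then show ?thesis unfolding poly_hom.map_poly_pderiv mapQ .
    qed
    have L1: "L 1 = A0" unfolding L_def by (simp add: Finite_Cartesian_Product.vec_eq_iff)
    have "poly (resultant Q (pderiv Q)) 1 \<noteq> 0"
      using A0(2) dz_iff res[of 1] L1 by simp
    then have Rs0: "resultant Q (pderiv Q) \<noteq> 0" by auto
    have fin: "finite {t. poly (resultant Q (pderiv Q)) t = 0}"
      using poly_roots_finite[OF Rs0] .
    have Lreal: "L (of_real t) = (1 - t) *\<^sub>R B + t *\<^sub>R A0" for t
    proof (rule Finite_Cartesian_Product.vec_eq_iff[THEN iffD2], intro allI, rule Finite_Cartesian_Product.vec_eq_iff[THEN iffD2], intro allI)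
      fix i j
      show "vec_nth (vec_nth (L (of_real t)) i) j = vec_nth (vec_nth ((1 - t) *\<^sub>R B + t *\<^sub>R A0) i) j"
        unfolding L_def
        by (simp only: vector_add_component vector_scaleR_component vec_lambda_beta)
           (simp add: scaleR_conv_of_real algebra_simps)
    qed
    have Ldist: "dist (L (of_real t)) B = \<bar>t\<bar> * norm (A0 - B)" for t
    proof -
      have "L (of_real t) - B = t *\<^sub>R (A0 - B)" unfolding Lreal by (simp add: algebra_simps del: scaleR_conv_of_real)
      then show ?thesis by (simp add: dist_norm)
    qed
    show "B \<in> closure {A \<in> \<Omega>. distinct_zeros k q A}"
      unfolding closure_approachable
    proof (intro allI impI)
      fix e :: real assume e: "e > 0"
      have np: "norm (A0 - B) + 1 > 0" using norm_ge_zero[of "A0 - B"] by linarith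
      define d where "d = min 1 (e / (norm (A0 - B) + 1))"
      have d0: "d > 0" unfolding d_def using e np by simp
      have "infinite (of_real ` {0<..<d} :: complex set)"
        using d0 by (subst finite_image_iff) (auto simp: inj_on_def)
      then obtain z where "z \<in> of_real ` {0<..<d}" "z \<notin> {t. poly (resultant Q (pderiv Q)) t = 0}"
        using fin by (meson finite_subset subsetI)
      then obtain t where t: "0 < t" "t < d" "poly (resultant Q (pderiv Q)) (of_real t) \<noteq> 0"
        by auto
      have "L (of_real t) \<in> \<Omega>" unfolding Lreal
        using convexD[OF assms(4) B A0(1), of "1 - t" t] t d_def by simp
      moreover have "distinct_zeros k q (L (of_real t))" using dz_iff res t(3) by simp
      moreover have "dist (L (of_real t)) B < e"
      proof -
        have "t * norm (A0 - B) \<le> t * (norm (A0 - B) + 1)" using t by simp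
        also have "\<dots> < d * (norm (A0 - B) + 1)" using t np by (intro mult_strict_right_mono) auto
        also have "\<dots> \<le> (e / (norm (A0 - B) + 1)) * (norm (A0 - B) + 1)"
          unfolding d_def using np by (intro mult_right_mono) auto
        also have "\<dots> = e" using np by simp
        finally show ?thesis using Ldist[of t] t by simp
      qed
      ultimately show "\<exists>y\<in>{A \<in> \<Omega>. distinct_zeros k q A}. dist y B < e" by blast
    qed
  qed
qed

end
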